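(* Let $n\ge 3$. Let $\pi$ be a permutation of $\{1,\dots,n\}$ containing the pattern $321$ exactly once, and let $c>b>a$ be the values of that unique occurrence, so that $\pi$ can be written as the concatenation $\pi=\pi_1\, c\, \pi_2\, b\, \pi_3\, a\, \pi_4$ of (possibly empty) words $\pi_1,\pi_2,\pi_3,\pi_4$ and the letters $c,b,a$. Then every entry of $\pi$ to the left of $b$ other than $c$ is smaller than $b$, and every entry to the right of $b$ other than $a$ is larger than $b$. Consequently $\sigma_1:=\pi_1\, b\, \pi_2\, a$ is a $321$-avoiding permutation of $\{1,\dots,b\}$ whose last letter is not $b$, and $\sigma_2:=c\,\pi_3\, b\,\pi_4$ is a $321$-avoiding permutation of $\{b,\dots,n\}$ whose first letter is not $b$. Moreover, the map $\pi\mapsto(b,\sigma_1,\sigma_2)$ is a bijection from the set of permutations of $\{1,\dots,n\}$ containing $321$ exactly once onto the set of triples $(b,\sigma_1,\sigma_2)$ with $2\le b\le n-1$, $\sigma_1$ a $321$-avoiding permutation of $\{1,\dots,b\}$ not ending with $b$, and $\sigma_2$ a $321$-avoiding permutation of $\{b,\dots,n\}$ not starting with $b$.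
   Context: Permutations are written in one-line notation as words; a permutation of a finite set of integers $S$ is a word using each element of $S$ exactly once. Such a word $w=w_1\cdots w_m$ contains an occurrence of the pattern $321$ if there are positions $i<j<k$ with $w_i>w_j>w_k$; it is $321$-avoiding if there is no such triple; it contains $321$ exactly once if there is exactly one such triple of positions. *)

theory Defs
  imports Main
begin

text \<open>Permutations are words (lists) of integers. Positions are 0-indexed.\<close>

definition is_perm_of :: "nat list \<Rightarrow> nat set \<Rightarrow> bool" where
  "is_perm_of w S \<longleftrightarrow> distinct w \<and> set w = S"

definition occ321 :: "nat list \<Rightarrow> (nat \<times> nat \<times> nat) set" where
  "occ321 w = {(i, j, k). i < j \<and> j < k \<and> k < length w \<and> w ! i > w ! j \<and> w ! j > w ! k}"

definition avoids321 :: "nat list \<Rightarrow> bool" where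
  "avoids321 w \<longleftrightarrow> occ321 w = {}"

definition contains321_once :: "nat list \<Rightarrow> bool" where
  "contains321_once w \<longleftrightarrow> card (occ321 w) = 1"

definition seg :: "nat list \<Rightarrow> nat \<Rightarrow> nat \<Rightarrow> nat list" where
  "seg w l r = take (r - l) (drop l w)"

text \<open>The map pi |-> (b, sigma1, sigma2), where pi = pi1 c pi2 b pi3 a pi4 with the unique
  occurrence at positions i < j < k; sigma1 = pi1 b pi2 a, sigma2 = c pi3 b pi4.\<close>
definition decomp321 :: "nat list \<Rightarrow> nat \<times> nat list \<times> nat list" where
  "decomp321 w = (let (i, j, k) = (THE t. t \<in> occ321 w) in
     (w ! j,
      seg w 0 i @ [w ! j] @ seg w (Suc i) j @ [w ! k],
      [w ! i] @ seg w (Suc j) k @ [w ! j] @ seg w (Suc k) (length w)))"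

definition perms321_once :: "nat \<Rightarrow> nat list set" where
  "perms321_once n = {w. is_perm_of w {1..n} \<and> contains321_once w}"

definition triples321 :: "nat \<Rightarrow> (nat \<times> nat list \<times> nat list) set" where
  "triples321 n = {(b, s1, s2). 2 \<le> b \<and> b \<le> n - 1
      \<and> is_perm_of s1 {1..b} \<and> avoids321 s1 \<and> last s1 \<noteq> b
      \<and> is_perm_of s2 {b..n} \<and> avoids321 s2 \<and> hd s2 \<noteq> b}"

end

theory Submission imports Defs begin

lemma occ_iff: "(p,q,r) \<in> occ321 w \<longleftrightarrow> p < q \<and> q < r \<and> r < length w \<and> w!p > w!q \<and> w!q > w!r"
  by (simp add: occ321_def)

lemma decomp_nice:
  assumes "occ321 w = {(i,j,k)}"
  shows "decomp321 w = (w!j, take (Suc j) (w[i:=w!j, j:=w!k]), drop j (w[j:=w!i, k:=w!j]))"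
proof -
  have o: "i<j" "j<k" "k<length w" using assms occ_iff by blast+
  have 1: "seg w 0 i @ [w!j] @ seg w (Suc i) j @ [w!k] = take (Suc j) (w[i:=w!j, j:=w!k])"
    using o by (intro nth_equalityI) (auto simp: seg_def nth_append min_def nth_list_update nth_Cons')
  have 2: "[w!i] @ seg w (Suc j) k @ [w!j] @ seg w (Suc k) (length w) = drop j (w[j:=w!i, k:=w!j])"
    using o by (intro nth_equalityI) (auto simp: seg_def nth_append min_def nth_list_update nth_Cons' add.commute)
  show ?thesis unfolding decomp321_def assms using 1 2 by simp
qed

definition idx :: "nat list \<Rightarrow> nat \<Rightarrow> nat" where
  "idx s v = (LEAST p. p < length s \<and> s!p = v)"

lemma idx_eq: "distinct s \<Longrightarrow> p < length s \<Longrightarrow> s!p = v \<Longrightarrow> idx s v = p"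
  unfolding idx_def by (rule Least_equality) (auto simp: nth_eq_iff_index_eq)

definition recon :: "nat \<times> nat list \<times> nat list \<Rightarrow> nat list" where
  "recon x = (case x of (b,s1,s2) \<Rightarrow>
     take (length s1 - 1) (s1[idx s1 b := hd s2]) @ s2[0 := b, idx s2 b := last s1])"

context
  fixes w n i j k
  assumes wP: "w \<in> perms321_once n" and oc: "occ321 w = {(i,j,k)}"
begin

lemma len: "length w = n" and dist: "distinct w" and setw: "set w = {1..n}"
proof -
  show d: "distinct w" and s: "set w = {1..n}" using wP by (auto simp: perms321_once_def is_perm_of_def)
  show "length w = n" using distinct_card[OF d] s by simp
qed

lemma ijk: "i<j" "j<k" "k<length w" "w!i > w!j" "w!j > w!k"
  using oc occ_iff by blast+

lemma vals: "p < length w \<Longrightarrow> 1 \<le> w!p \<and> w!p \<le> n"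
  using nth_mem[of p w] setw by auto

lemma neq: "p < length w \<Longrightarrow> q < length w \<Longrightarrow> p \<noteq> q \<Longrightarrow> w!p \<noteq> w!q"
  using dist by (simp add: nth_eq_iff_index_eq)

lemma L: "p < j \<Longrightarrow> p \<noteq> i \<Longrightarrow> w!p < w!j"
proof (rule ccontr)
  assume a: "p < j" "p \<noteq> i" "\<not> w!p < w!j"
  have "w!p \<noteq> w!j" using neq[of p j] a ijk by auto
  hence "(p,j,k) \<in> occ321 w" using a ijk by (auto simp: occ_iff)
  thus False using oc a by auto
qed

lemma R: "j < p \<Longrightarrow> p < length w \<Longrightarrow> p \<noteq> k \<Longrightarrow> w!p > w!j"
proof (rule ccontr)
  assume a: "j < p" "p < length w" "p \<noteq> k" "\<not> w!p > w!j"
  have "w!p \<noteq> w!j" using neq[of p j] a ijk by auto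
  hence "(i,j,p) \<in> occ321 w" using a ijk by (auto simp: occ_iff)
  thus False using oc a by auto
qed

definition "s1 = take (Suc j) (w[i:=w!j, j:=w!k])"
definition "s2 = drop j (w[j:=w!i, k:=w!j])"

lemma len1: "length s1 = Suc j" using ijk by (simp add: s1_def)
lemma len2: "length s2 = length w - j" by (simp add: s2_def)

lemma s1nth: "x \<le> j \<Longrightarrow> s1!x = (if x = i then w!j else if x = j then w!k else w!x)"
  using ijk by (auto simp: s1_def nth_list_update)

lemma s2nth: "x < length w - j \<Longrightarrow> s2!x = (if x = 0 then w!i else if x = k-j then w!j else w!(j+x))"
  using ijk by (auto simp: s2_def nth_list_update)


lemma set1: "set s1 = {1..w!j}"
proof
  show "set s1 \<subseteq> {1..w!j}"
  proof
    fix v assume "v \<in> set s1"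
    then obtain x where x: "x < Suc j" "s1!x = v" using len1 by (auto simp: in_set_conv_nth)
    show "v \<in> {1..w!j}"
      using x s1nth[of x] vals[of x] vals[of j] vals[of k] L[of x] ijk by (auto split: if_splits)
  qed
  show "{1..w!j} \<subseteq> set s1"
  proof
    fix v assume v: "v \<in> {1..w!j}"
    have "v \<in> set w" using v setw vals[of j] ijk by auto
    then obtain p where p: "p < length w" "w!p = v" by (auto simp: in_set_conv_nth)
    show "v \<in> set s1"
    proof (cases "p = j")
      case True thus ?thesis using p s1nth[of i] ijk len1 nth_mem[of i s1] by auto
    next
      case False
      show ?thesis
      proof (cases "p < j")
        case True
        hence "p \<noteq> i" using p v ijk by auto
        thus ?thesis using True p s1nth[of p] len1 nth_mem[of p s1] by auto
      next
        case f2: False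
        hence "p = k" using R[of p] False p v by fastforce
        thus ?thesis using p s1nth[of j] ijk len1 nth_mem[of j s1] by auto
      qed
    qed
  qed
qed

lemma dist1: "distinct s1"
proof -
  have "s1!x \<noteq> s1!y" if "x < Suc j" "y < Suc j" "x \<noteq> y" for x y
    using that s1nth[of x] s1nth[of y] neq[of x y] neq[of x k] neq[of y k] L[of x] L[of y] ijk
    by (auto split: if_splits)
  thus ?thesis by (auto simp: distinct_conv_nth len1)
qed

lemma avoid1: "avoids321 s1"
proof -
  have False if o: "(p,q,r) \<in> occ321 s1" for p q r
  proof -
    have pqr: "p<q" "q<r" "r\<le>j" "s1!p > s1!q" "s1!q > s1!r" using o len1 by (auto simp: occ_iff)
    have "q \<noteq> i" using pqr s1nth[of p] s1nth[of q] L[of p] by (auto split: if_splits)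
    have "r \<noteq> i" using pqr s1nth[of r] s1nth[of q] L[of q] by (auto split: if_splits)
    have "(p, q, if r = j then k else r) \<in> occ321 w"
      using pqr \<open>q \<noteq> i\<close> \<open>r \<noteq> i\<close> s1nth[of p] s1nth[of q] s1nth[of r] ijk
      by (auto simp: occ_iff split: if_splits)
    thus False using oc pqr by auto
  qed
  thus ?thesis unfolding avoids321_def by auto
qed

lemma set2: "set s2 = {w!j..n}"
proof
  show "set s2 \<subseteq> {w!j..n}"
  proof
    fix v assume "v \<in> set s2"
    then obtain x where x: "x < length w - j" "s2!x = v" using len2 by (auto simp: in_set_conv_nth)
    have "j + x < length w" using x by simp
    moreover have "x \<noteq> 0 \<Longrightarrow> x \<noteq> k - j \<Longrightarrow> w!(j+x) > w!j" using R[of "j+x"] x ijk by simp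
    ultimately show "v \<in> {w!j..n}"
      using x s2nth[of x] vals[of "j+x"] vals[of j] vals[of i] ijk by (auto split: if_splits)
  qed
  show "{w!j..n} \<subseteq> set s2"
  proof
    fix v assume v: "v \<in> {w!j..n}"
    have "v \<in> set w" using v setw vals[of j] ijk by auto
    then obtain p where p: "p < length w" "w!p = v" by (auto simp: in_set_conv_nth)
    show "v \<in> set s2"
    proof (cases "p = j")
      case True thus ?thesis using p s2nth[of "k-j"] ijk len2 nth_mem[of "k-j" s2] by auto
    next
      case False
      show ?thesis
      proof (cases "p < j")
        case True
        hence "p = i" using p v L[of p] by fastforce
        thus ?thesis using p s2nth[of 0] ijk len2 nth_mem[of 0 s2] by auto
      next
        case f2: False
        hence "p \<noteq> k" using p v ijk by auto
        have h: "p - j < length w - j" "p - j \<noteq> 0" "p - j \<noteq> k - j" "j + (p - j) = p"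
          using f2 False p \<open>p \<noteq> k\<close> ijk by auto
        thus ?thesis using p s2nth[of "p-j"] len2 nth_mem[of "p-j" s2] by auto
      qed
    qed
  qed
qed

lemma dist2: "distinct s2"
proof -
  have "s2!x \<noteq> s2!y" if "x < length w - j" "y < length w - j" "x \<noteq> y" for x y
  proof -
    have h: "j+x < length w" "j+y < length w" using that by auto
    have "x \<noteq> 0 \<Longrightarrow> x \<noteq> k - j \<Longrightarrow> w!(j+x) > w!j" using R[of "j+x"] h ijk by simp
    moreover have "y \<noteq> 0 \<Longrightarrow> y \<noteq> k - j \<Longrightarrow> w!(j+y) > w!j" using R[of "j+y"] h ijk by simp
    ultimately show ?thesis
    using that h s2nth[of x] s2nth[of y] ijk nth_eq_iff_index_eq[OF dist]
    by (auto split: if_splits)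
  qed
  thus ?thesis by (auto simp: distinct_conv_nth len2)
qed

lemma avoid2: "avoids321 s2"
proof -
  have False if o: "(p,q,r) \<in> occ321 s2" for p q r
  proof -
    have pqr: "p<q" "q<r" "r< length w - j" "s2!p > s2!q" "s2!q > s2!r" using o len2 by (auto simp: occ_iff)
    have "q \<noteq> k - j"
    proof
      assume qk: "q = k - j"
      have "w!(j+r) > w!j" using R[of "j+r"] pqr qk ijk by simp
      thus False using pqr s2nth[of r] s2nth[of q] qk ijk by (auto split: if_splits)
    qed
    have "p \<noteq> k - j"
    proof
      assume pk: "p = k - j"
      have "w!(j+q) > w!j" using R[of "j+q"] pqr pk ijk \<open>q \<noteq> k - j\<close> by simp
      thus False using pqr s2nth[of p] s2nth[of q] pk ijk by (auto split: if_splits)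
    qed
    have "(if p = 0 then i else j + p, j + q, j + r) \<in> occ321 w"
      using pqr \<open>q \<noteq> k - j\<close> \<open>p \<noteq> k - j\<close> s2nth[of p] s2nth[of q] s2nth[of r] ijk
      by (auto simp: occ_iff split: if_splits)
    thus False using oc pqr by auto
  qed
  thus ?thesis unfolding avoids321_def by auto
qed


lemma dec: "decomp321 w = (w!j, s1, s2)"
  using decomp_nice[OF oc] by (simp add: s1_def s2_def)

lemma last1: "last s1 = w!k"
proof -
  have "s1 \<noteq> []" using len1 by auto
  thus ?thesis using last_conv_nth[of s1] len1 s1nth[of j] ijk by auto
qed
lemma hd2: "hd s2 = w!i"
proof -
  have "s2 \<noteq> []" using len2 ijk by auto
  thus ?thesis using hd_conv_nth[of s2] len2 s2nth[of 0] ijk by auto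
qed

lemma inT: "decomp321 w \<in> triples321 n"
proof -
  have "2 \<le> w!j" "w!j \<le> n - 1" using vals[of k] vals[of i] ijk by auto
  thus ?thesis unfolding dec triples321_def is_perm_of_def
    using dist1 set1 dist2 set2 avoid1 avoid2 last1 hd2 ijk by auto
qed

lemma rec: "recon (decomp321 w) = w"
proof -
  have i1: "idx s1 (w!j) = i" using idx_eq[OF dist1, of i] s1nth[of i] len1 ijk by auto
  have i2: "idx s2 (w!j) = k - j" using idx_eq[OF dist2, of "k-j"] s2nth[of "k-j"] len2 ijk by auto
  have "take j (s1[i := w!i]) @ s2[0 := w!j, k - j := w!k] = w"
  proof (rule nth_equalityI)
    show "length (take j (s1[i := w!i]) @ s2[0 := w!j, k - j := w!k]) = length w"
      using len1 len2 ijk by simp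
    fix x assume "x < length (take j (s1[i := w!i]) @ s2[0 := w!j, k - j := w!k])"
    hence x: "x < length w" using len1 len2 ijk by simp
    show "(take j (s1[i := w!i]) @ s2[0 := w!j, k - j := w!k]) ! x = w ! x"
    proof (cases "x < j")
      case True thus ?thesis using s1nth[of x] len1 ijk by (auto simp: nth_append nth_list_update)
    next
      case False
      hence h: "x - j < length w - j" "j + (x - j) = x" using x by auto
      have e: "(take j (s1[i := w!i]) @ s2[0 := w!j, k - j := w!k]) ! x = s2[0 := w!j, k - j := w!k] ! (x - j)"
        using False len1 ijk by (simp add: nth_append)
      show ?thesis
      proof (cases "x = j")
        case True thus ?thesis using e len2 ijk by (simp add: nth_list_update)
      next
        case f3: False
        show ?thesis
        proof (cases "x = k")
          case True thus ?thesis using e len2 ijk by (simp add: nth_list_update)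
        next
          case False
          hence "x - j \<noteq> 0" "x - j \<noteq> k - j" using f3 \<open>\<not> x < j\<close> ijk by auto
          thus ?thesis using e h s2nth[of "x-j"] len2 ijk by (simp add: nth_list_update)
        qed
      qed
    qed
  qed
  thus ?thesis unfolding recon_def dec using i1 i2 len1 last1 hd2 by simp
qed

end

context
  fixes n b u1 u2
  assumes T: "(b,u1,u2) \<in> triples321 n"
begin

lemma tb: "2 \<le> b" "b \<le> n - 1" and td1: "distinct u1" and ts1: "set u1 = {1..b}" and ta1: "avoids321 u1"
  and tl1: "last u1 \<noteq> b" and td2: "distinct u2" and ts2: "set u2 = {b..n}" and ta2: "avoids321 u2"
  and th2: "hd u2 \<noteq> b"
  using T by (auto simp: triples321_def is_perm_of_def)

lemma tl1': "length u1 = b" using distinct_card[OF td1] ts1 by simp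
lemma tl2': "length u2 = n + 1 - b" using distinct_card[OF td2] ts2 by simp

definition "m = b - 1"
definition "i = idx u1 b"
definition "t = idx u2 b"

lemma mb: "Suc m = b" using tb by (simp add: m_def)

lemma ipos: "i < m" "u1!i = b"
proof -
  obtain p where p: "p < length u1" "u1!p = b" using ts1 tb by (metis atLeastAtMost_iff in_set_conv_nth le_trans one_le_numeral order_refl)
  have "i = p" using idx_eq[OF td1 p] by (simp add: i_def)
  moreover have "p \<noteq> m"
  proof
    assume "p = m"
    moreover have "u1 \<noteq> []" using p by auto
    ultimately show False using p tl1 last_conv_nth[of u1] tl1' mb by (auto simp: m_def)
  qed
  ultimately show "i < m" "u1!i = b" using p tl1' mb by auto
qed

lemma tpos: "0 < t" "t < length u2" "u2!t = b"
proof -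
  obtain p where p: "p < length u2" "u2!p = b" using ts2 tb by (metis atLeastAtMost_iff in_set_conv_nth le_refl le_diff_conv le_trans diff_le_self)
  have "t = p" using idx_eq[OF td2 p] by (simp add: t_def)
  moreover have "p \<noteq> 0"
  proof
    assume "p = 0"
    moreover have "u2 \<noteq> []" using p by auto
    ultimately show False using p th2 hd_conv_nth[of u2] by auto
  qed
  ultimately show "0 < t" "t < length u2" "u2!t = b" using p by auto
qed

lemma v1: "x < b \<Longrightarrow> 1 \<le> u1!x \<and> u1!x \<le> b"
  using nth_mem[of x u1] ts1 tl1' by auto
lemma v1': "x < b \<Longrightarrow> x \<noteq> i \<Longrightarrow> u1!x < b"
  using v1[of x] ipos nth_eq_iff_index_eq[OF td1, of x i] tl1' mb by (fastforce simp: le_less)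
lemma v2: "x < length u2 \<Longrightarrow> b \<le> u2!x \<and> u2!x \<le> n"
  using nth_mem[of x u2] ts2 by auto
lemma v2': "x < length u2 \<Longrightarrow> x \<noteq> t \<Longrightarrow> u2!x > b"
  using v2[of x] tpos nth_eq_iff_index_eq[OF td2, of x t] by (fastforce simp: le_less)

definition "ww = take m (u1[i := u2!0]) @ u2[0 := b, t := u1!m]"

lemma wlen: "length ww = n"
  using tl1' tl2' tb mb by (simp add: ww_def m_def)

lemma wnth1: "x < m \<Longrightarrow> ww!x = (if x = i then u2!0 else u1!x)"
  using tl1' mb ipos by (simp add: ww_def nth_append nth_list_update)

lemma wnth2: "m \<le> x \<Longrightarrow> x < n \<Longrightarrow> ww!x = (if x = m then b else if x = m + t then u1!m else u2!(x-m))"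
proof -
  assume x: "m \<le> x" "x < n"
  have e: "ww!x = u2[0 := b, t := u1!m] ! (x - m)" using x tl1' mb by (simp add: ww_def nth_append)
  have "x - m < length u2" using x tl2' tb mb by (simp add: m_def)
  thus ?thesis using e x tpos by (auto simp: nth_list_update)
qed


lemma mlen: "m + length u2 = n" using tl2' tb mb by (simp add: m_def)
lemma ab: "u1!m < b" "1 \<le> u1!m" using v1'[of m] v1[of m] ipos mb by auto
lemma cb: "u2!0 > b" "u2!0 \<le> n"
proof -
  have "0 < length u2" using tpos by auto
  thus "u2!0 > b" "u2!0 \<le> n" using v2'[of 0] v2[of 0] tpos by auto
qed

lemma F1: "x < m \<Longrightarrow> x \<noteq> i \<Longrightarrow> ww!x = u1!x \<and> ww!x < b"
  using wnth1[of x] v1'[of x] mb by auto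
lemma F2: "ww!i = u2!0" using wnth1[of i] ipos by auto
lemma F3: "ww!m = b" using wnth2[of m] mlen tpos by auto
lemma F4: "ww!(m+t) = u1!m" using wnth2[of "m+t"] mlen tpos by auto
lemma F5: "m < x \<Longrightarrow> x < n \<Longrightarrow> x \<noteq> m + t \<Longrightarrow> ww!x = u2!(x-m) \<and> ww!x > b"
  using wnth2[of x] v2'[of "x-m"] mlen by auto

lemma wset: "set ww = {1..n}"
proof
  show "set ww \<subseteq> {1..n}"
  proof
    fix v assume "v \<in> set ww"
    then obtain x where x: "x < n" "ww!x = v" using wlen by (auto simp: in_set_conv_nth)
    show "v \<in> {1..n}"
    proof (cases "x < m")
      case True thus ?thesis using x F1[of x] F2 cb tb v1[of x] mb by (cases "x = i") auto
    next
      case False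
      hence "x = m \<or> x = m + t \<or> m < x \<and> x \<noteq> m + t" by auto
      thus ?thesis using x F3 F4 F5[of x] ab tb v2[of "x - m"] mlen by auto
    qed
  qed
  show "{1..n} \<subseteq> set ww"
  proof
    fix v assume v: "v \<in> {1..n}"
    show "v \<in> set ww"
    proof (cases "v \<le> b")
      case True
      then obtain p where p: "p < length u1" "u1!p = v" using v ts1
        by (metis atLeastAtMost_iff in_set_conv_nth)
      have "p = i \<or> p = m \<or> p < m \<and> p \<noteq> i" using p tl1' mb by auto
      moreover have "m < n" "m + t < n" using mlen tpos by auto
      ultimately consider "p = i" | "p = m" | "p < m" "p \<noteq> i" by auto
      thus ?thesis
      proof cases
        case 1 thus ?thesis using p F3 ipos wlen \<open>m < n\<close> nth_mem[of m ww] by auto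
      next
        case 2 thus ?thesis using p F4 wlen \<open>m + t < n\<close> nth_mem[of "m+t" ww] by auto
      next
        case 3 thus ?thesis using p F1[of p] wlen \<open>m < n\<close> nth_mem[of p ww] by auto
      qed
    next
      case False
      then obtain p where p: "p < length u2" "u2!p = v" using v ts2
        by (metis atLeastAtMost_iff in_set_conv_nth nat_le_linear)
      have "p \<noteq> t" using p tpos False by auto
      have "p = 0 \<or> 0 < p" by auto
      moreover have "i < n" using ipos mlen by auto
      moreover have "p \<noteq> 0 \<Longrightarrow> m + p < n \<and> m < m + p \<and> m + p \<noteq> m + t \<and> m + p - m = p"
        using p \<open>p \<noteq> t\<close> mlen by auto
      ultimately show ?thesis using p F2 F5[of "m+p"] wlen nth_mem[of _ ww] by (metis not_gr0)
    qed
  qed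
qed

lemma wdist: "distinct ww"
  by (rule card_distinct) (simp add: wset wlen)

lemma wocc: "occ321 ww = {(i, m, m+t)}"
proof -
  have mem: "(i, m, m+t) \<in> occ321 ww"
    using ipos tpos mlen F2 F3 F4 ab cb wlen by (auto simp: occ_iff)
  have uniq: "(p,q,r) = (i,m,m+t)" if o: "(p,q,r) \<in> occ321 ww" for p q r
  proof -
    have pqr: "p<q" "q<r" "r<n" "ww!p > ww!q" "ww!q > ww!r" using o wlen by (auto simp: occ_iff)
    consider "q < m" | "q = m" | "m < q" by linarith
    thus ?thesis
    proof cases
      case 1
      have "q \<noteq> i"
      proof
        assume "q = i"
        thus False using pqr 1 F1[of p] F2 cb by auto
      qed
      hence q1: "ww!q = u1!q" "ww!q < b" using F1[of q] 1 by auto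
      have rc: "r < m \<and> r \<noteq> i \<or> r = m + t"
      proof -
        have "r \<noteq> i" using pqr q1 F2 cb 1 by auto
        moreover have "r \<noteq> m" using pqr q1 F3 by auto
        moreover have "\<not> (m < r \<and> r \<noteq> m + t)" using pqr q1 F5[of r] by auto
        ultimately show ?thesis by auto
      qed
      define r' where "r' = (if r = m + t then m else r)"
      have "(p,q,r') \<in> occ321 u1"
      proof -
        have "u1!p > u1!q" using pqr q1 F1[of p] F2 ipos 1 by (cases "p = i") auto
        moreover have "u1!q > u1!r'" using pqr q1 F1[of r] F4 rc by (auto simp: r'_def)
        moreover have "p < q" "q < r'" "r' < length u1" using pqr rc 1 tl1' mb by (auto simp: r'_def)
        ultimately show ?thesis by (simp add: occ_iff)
      qed
      thus ?thesis using ta1 by (auto simp: avoids321_def)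
    next
      case 2
      have "p = i" using pqr 2 F1[of p] F3 by (cases "p = i") auto
      moreover have "r = m + t" using pqr 2 F3 F5[of r] by (cases "r = m + t") auto
      ultimately show ?thesis using 2 by simp
    next
      case 3
      have "q \<noteq> m + t"
      proof
        assume qt: "q = m + t"
        hence "r \<noteq> m + t" using pqr by auto
        thus False using pqr qt F4 F5[of r] ab 3 by auto
      qed
      hence q1: "ww!q = u2!(q-m)" "ww!q > b" using F5[of q] 3 pqr by auto
      have pc: "p = i \<or> m < p \<and> p \<noteq> m + t"
      proof -
        have "\<not> (p < m \<and> p \<noteq> i)" using pqr q1 F1[of p] by auto
        moreover have "p \<noteq> m" using pqr q1 F3 by auto
        moreover have "p \<noteq> m + t" using pqr q1 F4 ab by auto
        ultimately show ?thesis using ipos by auto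
      qed
      define p' where "p' = (if p = i then 0 else p - m)"
      have "(p', q - m, r - m) \<in> occ321 u2"
      proof -
        have "u2!p' > u2!(q-m)" using pqr q1 F2 F5[of p] pc by (auto simp: p'_def)
        moreover have "u2!(q-m) > u2!(r-m)"
          using pqr q1 F5[of r] 3 tpos by (cases "r = m + t") auto
        moreover have "p' < q - m" "q - m < r - m" "r - m < length u2"
          using pqr pc 3 mlen ipos by (auto simp: p'_def)
        ultimately show ?thesis by (simp add: occ_iff)
      qed
      thus ?thesis using ta2 by (auto simp: avoids321_def)
    qed
  qed
  show ?thesis
  proof (rule set_eqI)
    fix x :: "nat \<times> nat \<times> nat"
    obtain p q r where x: "x = (p,q,r)" by (cases x)
    show "x \<in> occ321 ww \<longleftrightarrow> x \<in> {(i, m, m+t)}"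
      unfolding x using mem uniq[of p q r] by blast
  qed
qed

lemma wP: "ww \<in> perms321_once n"
  unfolding perms321_once_def is_perm_of_def contains321_once_def using wdist wset wocc by simp


lemma recw: "recon (b,u1,u2) = ww"
proof -
  have "u1 \<noteq> []" "u2 \<noteq> []" using tl1' tb tpos by auto
  hence "hd u2 = u2!0" "last u1 = u1!m" using hd_conv_nth[of u2] last_conv_nth[of u1] tl1' by (auto simp: m_def)
  moreover have "length u1 - 1 = m" using tl1' by (simp add: m_def)
  ultimately show ?thesis by (simp add: recon_def ww_def i_def t_def)
qed

lemma recP: "recon (b,u1,u2) \<in> perms321_once n" using recw wP by simp

lemma decrec: "decomp321 (recon (b,u1,u2)) = (b,u1,u2)"
proof -
  have mn: "m < n" "m + t < n" using mlen tpos by auto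
  have 1: "take (Suc m) (ww[i:=ww!m, m:=ww!(m+t)]) = u1"
  proof (rule nth_equalityI)
    show "length (take (Suc m) (ww[i:=ww!m, m:=ww!(m+t)])) = length u1" using mn wlen tl1' mb by simp
    fix x assume "x < length (take (Suc m) (ww[i:=ww!m, m:=ww!(m+t)]))"
    hence x: "x \<le> m" using mn wlen by simp
    consider "x = i" | "x = m" | "x < m" "x \<noteq> i" using x by linarith
    thus "take (Suc m) (ww[i:=ww!m, m:=ww!(m+t)]) ! x = u1 ! x"
    proof cases
      case 1 thus ?thesis using ipos mn wlen F3 by (simp add: nth_list_update)
    next
      case 2 thus ?thesis using ipos mn wlen F4 by (simp add: nth_list_update)
    next
      case 3 thus ?thesis using ipos mn wlen F1[of x] by (simp add: nth_list_update)
    qed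
  qed
  have 2: "drop m (ww[m:=ww!i, m+t:=ww!m]) = u2"
  proof (rule nth_equalityI)
    show "length (drop m (ww[m:=ww!i, m+t:=ww!m])) = length u2" using mlen wlen by simp
    fix x assume "x < length (drop m (ww[m:=ww!i, m+t:=ww!m]))"
    hence x: "x < length u2" using mlen wlen by simp
    consider "x = 0" | "x = t" | "0 < x" "x \<noteq> t" by linarith
    thus "drop m (ww[m:=ww!i, m+t:=ww!m]) ! x = u2 ! x"
    proof cases
      case 1 thus ?thesis using tpos mn wlen F2 by (simp add: nth_list_update)
    next
      case 2 thus ?thesis using tpos mn wlen F3 by (simp add: nth_list_update)
    next
      case 3
      have "m + x < n" using x mlen by simp
      thus ?thesis using 3 wlen F5[of "m+x"] by (simp add: nth_list_update)
    qed
  qed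
  show ?thesis using decomp_nice[OF wocc] 1 2 F3 recw by simp
qed

end


theorem mainTheorem2:
  fixes n :: nat
  assumes "n \<ge> 3"
  shows "(\<forall>w i j k. w \<in> perms321_once n \<and> occ321 w = {(i, j, k)} \<longrightarrow>
            (\<forall>p < j. p \<noteq> i \<longrightarrow> w ! p < w ! j) \<and>
            (\<forall>p. j < p \<and> p < length w \<and> p \<noteq> k \<longrightarrow> w ! p > w ! j))
       \<and> (\<forall>w \<in> perms321_once n. decomp321 w \<in> triples321 n)
       \<and> bij_betw decomp321 (perms321_once n) (triples321 n)"
proof -
  have ex: "\<exists>i j k. occ321 w = {(i,j,k)}" if "w \<in> perms321_once n" for w
  proof -
    have "card (occ321 w) = 1" using that by (simp add: perms321_once_def contains321_once_def)
    then obtain x where "occ321 w = {x}" by (auto simp: card_Suc_eq)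
    thus ?thesis by (cases x) auto
  qed
  have p1: "\<forall>w i j k. w \<in> perms321_once n \<and> occ321 w = {(i, j, k)} \<longrightarrow>
            (\<forall>p < j. p \<noteq> i \<longrightarrow> w ! p < w ! j) \<and>
            (\<forall>p. j < p \<and> p < length w \<and> p \<noteq> k \<longrightarrow> w ! p > w ! j)"
  proof (intro allI impI conjI)
    fix w i j k p
    assume h: "w \<in> perms321_once n \<and> occ321 w = {(i, j, k)}" and "p < j" "p \<noteq> i"
    thus "w ! p < w ! j" using L[of w n i j k p] by simp
  next
    fix w i j k p
    assume h: "w \<in> perms321_once n \<and> occ321 w = {(i, j, k)}" and "j < p \<and> p < length w \<and> p \<noteq> k"
    thus "w ! p > w ! j" using R[of w n i j k p] by simp
  qed
  have p2: "\<forall>w \<in> perms321_once n. decomp321 w \<in> triples321 n"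
  proof
    fix w assume h: "w \<in> perms321_once n"
    then obtain i j k where "occ321 w = {(i,j,k)}" using ex by blast
    thus "decomp321 w \<in> triples321 n" using inT[OF h] by simp
  qed
  have p3: "bij_betw decomp321 (perms321_once n) (triples321 n)"
  proof (rule bij_betw_byWitness[where f' = recon])
    show "\<forall>w\<in>perms321_once n. recon (decomp321 w) = w"
    proof
      fix w assume h: "w \<in> perms321_once n"
      then obtain i j k where "occ321 w = {(i,j,k)}" using ex by blast
      thus "recon (decomp321 w) = w" using rec[OF h] by simp
    qed
    show "\<forall>x\<in>triples321 n. decomp321 (recon x) = x"
    proof
      fix x assume "x \<in> triples321 n"
      moreover obtain b u1 u2 where "x = (b,u1,u2)" by (cases x)
      ultimately show "decomp321 (recon x) = x" using decrec by simp
    qed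
    show "decomp321 ` perms321_once n \<subseteq> triples321 n" using p2 by blast
    show "recon ` triples321 n \<subseteq> perms321_once n"
    proof
      fix y assume "y \<in> recon ` triples321 n"
      then obtain x where x: "x \<in> triples321 n" "y = recon x" by blast
      moreover obtain b u1 u2 where "x = (b,u1,u2)" by (cases x)
      ultimately show "y \<in> perms321_once n" using recP by simp
    qed
  qed
  show ?thesis using p1 p2 p3 by blast
qed

end
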